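(* Let $S$ be an abelian semigroup (written additively, containing an identity element $0$), let $r \geq 1$, and let $A_1,\ldots,A_r, B$ be finite, nonempty subsets of $S$. Then there exists a polynomial $p(z_1,\ldots,z_r)$ such that \[ |B + h_1A_1 + \cdots + h_rA_r| = p(h_1,\ldots,h_r) \] for all nonnegative integers $h_1,\ldots,h_r$ with $\min(h_1,\ldots,h_r)$ sufficiently large.
   Context: For a nonempty subset $A$ of $S$ and a positive integer $h$, $hA$ denotes the set of all sums of $h$ not necessarily distinct elements of $A$, and $0A = \{0\}$. For nonempty subsets $A_1,\ldots,A_r,B$ of $S$ and nonnegative integers $h_1,\ldots,h_r$, $B + h_1A_1 + \cdots + h_rA_r$ denotes the set of all elements of $S$ of the form $b + u_1 + \cdots + u_r$ with $b \in B$ and $u_i \in h_iA_i$ for each $i$. $|X|$ denotes the cardinality of a set $X$. *)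

theory Defs
  imports Complex_Main
begin

definition hfold_sumset :: "nat \<Rightarrow> 'a::comm_monoid_add set \<Rightarrow> 'a set" where
  "hfold_sumset h A = {sum_list xs | xs. length xs = h \<and> set xs \<subseteq> A}"

text \<open>B + h_0 A_0 + ... + h_{r-1} A_{r-1} (indices shifted to 0..r-1).\<close>
definition multi_sumset ::
  "'a::comm_monoid_add set \<Rightarrow> (nat \<Rightarrow> 'a set) \<Rightarrow> (nat \<Rightarrow> nat) \<Rightarrow> nat \<Rightarrow> 'a set" where
  "multi_sumset B A h r =
     {b + (\<Sum>i<r. u i) | b u. b \<in> B \<and> (\<forall>i<r. u i \<in> hfold_sumset (h i) (A i))}"

definition is_poly_fun :: "nat \<Rightarrow> ((nat \<Rightarrow> nat) \<Rightarrow> real) \<Rightarrow> bool" where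
  "is_poly_fun r p \<longleftrightarrow> (\<exists>E c. finite E \<and> (\<forall>e\<in>E. \<forall>i\<ge>r. e i = 0) \<and>
     (\<forall>h. p h = (\<Sum>e\<in>E. c e * (\<Prod>i<r. real (h i) ^ e i))))"

end

theory Submission
  imports Defs "HOL-Library.List_Lexorder" "HOL-Library.Ramsey" "HOL-Library.FuncSet"
begin

definition mono_r :: "nat \<Rightarrow> (nat \<Rightarrow> nat) \<Rightarrow> (nat \<Rightarrow> nat) \<Rightarrow> real" where
  "mono_r r e h = (\<Prod>i<r. real (h i) ^ e i)"

lemma is_poly_gen:
  assumes "finite T" "\<forall>t\<in>T. \<forall>i\<ge>r. ex t i = 0"
    and "\<forall>h. p h = (\<Sum>t\<in>T. a t * mono_r r (ex t) h)"
  shows "is_poly_fun r p"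
proof -
  define E where "E = ex ` T"
  define c where "c e = (\<Sum>t\<in>{t. t \<in> T \<and> ex t = e}. a t)" for e
  have fE: "finite E" using assms(1) by (simp add: E_def)
  have "p h = (\<Sum>e\<in>E. c e * mono_r r e h)" for h
  proof -
    have "(\<Sum>e\<in>E. c e * mono_r r e h) = (\<Sum>e\<in>E. (\<Sum>t\<in>{t. t \<in> T \<and> ex t = e}. a t * mono_r r (ex t) h))"
      unfolding c_def sum_distrib_right by (rule sum.cong) auto
    also have "\<dots> = (\<Sum>t\<in>T. a t * mono_r r (ex t) h)"
      by (rule sum.group) (use assms(1) fE in \<open>auto simp: E_def\<close>)
    finally show ?thesis using assms(3) by simp
  qed
  then show ?thesis unfolding is_poly_fun_def mono_r_def
    using fE assms(2) by (auto simp: E_def intro!: exI[of _ E] exI[of _ c])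
qed

lemma is_poly_funE:
  assumes "is_poly_fun r p"
  obtains E c where "finite E" "\<forall>e\<in>E. \<forall>i\<ge>r. e i = 0" "\<forall>h. p h = (\<Sum>e\<in>E. c e * mono_r r e h)"
  using assms unfolding is_poly_fun_def mono_r_def by blast

lemma is_poly_const: "is_poly_fun r (\<lambda>h. c)"
  by (rule is_poly_gen[where T="{()}" and ex="\<lambda>_ _. 0" and a="\<lambda>_. c"]) (auto simp: mono_r_def)

lemma is_poly_var: assumes "i < r" shows "is_poly_fun r (\<lambda>h. real (h i))"
proof (rule is_poly_gen[where T="{()}" and ex="\<lambda>_ j. if j = i then 1 else 0" and a="\<lambda>_. 1"])
  show "\<forall>h. real (h i) = (\<Sum>t\<in>{()}. 1 * mono_r r (\<lambda>j. if j = i then 1 else 0) h)"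
  proof
    fix h
    have "mono_r r (\<lambda>j. if j = i then 1 else 0) h = (\<Prod>j<r. if j = i then real (h j) else 1)"
      unfolding mono_r_def by (rule prod.cong) auto
    also have "\<dots> = real (h i)" using \<open>i < r\<close> by (simp add: prod.delta)
    finally show "real (h i) = (\<Sum>t\<in>{()}. 1 * mono_r r (\<lambda>j. if j = i then 1 else 0) h)" by simp
  qed
qed (use assms in auto)

lemma is_poly_add:
  assumes "is_poly_fun r p" "is_poly_fun r q"
  shows "is_poly_fun r (\<lambda>h. p h + q h)"
proof -
  obtain E1 c1 where 1: "finite E1" "\<forall>e\<in>E1. \<forall>i\<ge>r. e i = 0" "\<forall>h. p h = (\<Sum>e\<in>E1. c1 e * mono_r r e h)"
    using assms(1) by (rule is_poly_funE)
  obtain E2 c2 where 2: "finite E2" "\<forall>e\<in>E2. \<forall>i\<ge>r. e i = 0" "\<forall>h. q h = (\<Sum>e\<in>E2. c2 e * mono_r r e h)"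
    using assms(2) by (rule is_poly_funE)
  show ?thesis
    apply (rule is_poly_gen[where T="E1 <+> E2" and ex="case_sum id id" and a="case_sum c1 c2"])
    using 1 2 by (auto simp: sum.Plus comp_def)
qed

lemma mono_r_mult: "mono_r r e1 h * mono_r r e2 h = mono_r r (\<lambda>i. e1 i + e2 i) h"
  unfolding mono_r_def by (simp add: prod.distrib[symmetric] power_add)

lemma is_poly_mult:
  assumes "is_poly_fun r p" "is_poly_fun r q"
  shows "is_poly_fun r (\<lambda>h. p h * q h)"
proof -
  obtain E1 c1 where 1: "finite E1" "\<forall>e\<in>E1. \<forall>i\<ge>r. e i = 0" "\<forall>h. p h = (\<Sum>e\<in>E1. c1 e * mono_r r e h)"
    using assms(1) by (rule is_poly_funE)
  obtain E2 c2 where 2: "finite E2" "\<forall>e\<in>E2. \<forall>i\<ge>r. e i = 0" "\<forall>h. q h = (\<Sum>e\<in>E2. c2 e * mono_r r e h)"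
    using assms(2) by (rule is_poly_funE)
  show ?thesis
  proof (rule is_poly_gen[where T="E1 \<times> E2" and ex="\<lambda>t i. fst t i + snd t i" and a="\<lambda>t. c1 (fst t) * c2 (snd t)"])
    show "\<forall>h. p h * q h = (\<Sum>t\<in>E1 \<times> E2. c1 (fst t) * c2 (snd t) * mono_r r (\<lambda>i. fst t i + snd t i) h)"
    proof
      fix h
      have "p h * q h = (\<Sum>e1\<in>E1. \<Sum>e2\<in>E2. (c1 e1 * mono_r r e1 h) * (c2 e2 * mono_r r e2 h))"
        using 1 2 by (simp add: sum_product)
      also have "\<dots> = (\<Sum>t\<in>E1 \<times> E2. c1 (fst t) * c2 (snd t) * mono_r r (\<lambda>i. fst t i + snd t i) h)"
        by (simp add: sum.cartesian_product mono_r_mult[symmetric] algebra_simps split_def)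
      finally show "p h * q h = (\<Sum>t\<in>E1 \<times> E2. c1 (fst t) * c2 (snd t) * mono_r r (\<lambda>i. fst t i + snd t i) h)" .
    qed
  qed (use 1 2 in auto)
qed

inductive polyf :: "nat \<Rightarrow> ((nat \<Rightarrow> nat) \<Rightarrow> real) \<Rightarrow> bool" for r where
  pconst: "polyf r (\<lambda>h. c)"
| pvar: "i < r \<Longrightarrow> polyf r (\<lambda>h. real (h i))"
| padd: "polyf r p \<Longrightarrow> polyf r q \<Longrightarrow> polyf r (\<lambda>h. p h + q h)"
| pmul: "polyf r p \<Longrightarrow> polyf r q \<Longrightarrow> polyf r (\<lambda>h. p h * q h)"

lemma polyf_is_poly: "polyf r p \<Longrightarrow> is_poly_fun r p"
  by (induction rule: polyf.induct) (auto intro: is_poly_const is_poly_var is_poly_add is_poly_mult)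

lemma polyf_prod: "finite S \<Longrightarrow> (\<forall>s\<in>S. polyf r (f s)) \<Longrightarrow> polyf r (\<lambda>h. \<Prod>s\<in>S. f s h)"
  by (induction S rule: finite_induct) (auto intro: polyf.intros)

lemma polyf_sum: "finite S \<Longrightarrow> (\<forall>s\<in>S. polyf r (f s)) \<Longrightarrow> polyf r (\<lambda>h. \<Sum>s\<in>S. f s h)"
  by (induction S rule: finite_induct) (auto intro: polyf.intros)

lemma polyf_shift:
  "polyf r p \<Longrightarrow> \<exists>q. polyf r q \<and> (\<forall>h. (\<forall>i<r. d i \<le> h i) \<longrightarrow> p (\<lambda>i. h i - d i) = q h)"
proof (induction rule: polyf.induct)
  case (pconst c)
  then show ?case by (auto intro: polyf.intros)
next
  case (pvar i)
  have "polyf r (\<lambda>h. real (h i) + (- real (d i)))" using pvar by (intro polyf.intros)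
  moreover have "\<forall>h. (\<forall>i<r. d i \<le> h i) \<longrightarrow> real (h i - d i) = real (h i) + (- real (d i))"
    using pvar by (auto simp: of_nat_diff)
  ultimately show ?case by blast
next
  case (padd p q)
  then obtain p' q' where "polyf r p'" "polyf r q'"
    "\<forall>h. (\<forall>i<r. d i \<le> h i) \<longrightarrow> p (\<lambda>i. h i - d i) = p' h"
    "\<forall>h. (\<forall>i<r. d i \<le> h i) \<longrightarrow> q (\<lambda>i. h i - d i) = q' h" by blast
  then show ?case by (intro exI[of _ "\<lambda>h. p' h + q' h"]) (auto intro: polyf.intros)
next
  case (pmul p q)
  then obtain p' q' where "polyf r p'" "polyf r q'"
    "\<forall>h. (\<forall>i<r. d i \<le> h i) \<longrightarrow> p (\<lambda>i. h i - d i) = p' h"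
    "\<forall>h. (\<forall>i<r. d i \<le> h i) \<longrightarrow> q (\<lambda>i. h i - d i) = q' h" by blast
  then show ?case by (intro exI[of _ "\<lambda>h. p' h * q' h"]) (auto intro: polyf.intros)
qed

definition EP :: "nat \<Rightarrow> ((nat \<Rightarrow> nat) \<Rightarrow> real) \<Rightarrow> bool" where
  "EP r f \<longleftrightarrow> (\<exists>p N. polyf r p \<and> (\<forall>h. (\<forall>i<r. N \<le> h i) \<longrightarrow> f h = p h))"

lemma EP_poly: "polyf r p \<Longrightarrow> EP r p"
  unfolding EP_def by blast

lemma EP_cong:
  assumes "EP r f" "\<forall>h. (\<forall>i<r. N \<le> h i) \<longrightarrow> g h = f h"
  shows "EP r g"
proof -
  obtain p N' where "polyf r p" "\<forall>h. (\<forall>i<r. N' \<le> h i) \<longrightarrow> f h = p h"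
    using assms(1) unfolding EP_def by blast
  then show ?thesis using assms(2) unfolding EP_def
    by (intro exI[of _ p] exI[of _ "max N N'"]) auto
qed

lemma EP_add: assumes "EP r f" "EP r g" shows "EP r (\<lambda>h. f h + g h)"
proof -
  obtain p N where 1: "polyf r p" "\<forall>h. (\<forall>i<r. N \<le> h i) \<longrightarrow> f h = p h"
    using assms(1) unfolding EP_def by blast
  obtain q M where 2: "polyf r q" "\<forall>h. (\<forall>i<r. M \<le> h i) \<longrightarrow> g h = q h"
    using assms(2) unfolding EP_def by blast
  show ?thesis unfolding EP_def
    by (intro exI[of _ "\<lambda>h. p h + q h"] exI[of _ "max N M"]) (use 1 2 in \<open>auto intro: polyf.intros\<close>)
qed

lemma EP_mul: assumes "EP r f" "EP r g" shows "EP r (\<lambda>h. f h * g h)"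
proof -
  obtain p N where 1: "polyf r p" "\<forall>h. (\<forall>i<r. N \<le> h i) \<longrightarrow> f h = p h"
    using assms(1) unfolding EP_def by blast
  obtain q M where 2: "polyf r q" "\<forall>h. (\<forall>i<r. M \<le> h i) \<longrightarrow> g h = q h"
    using assms(2) unfolding EP_def by blast
  show ?thesis unfolding EP_def
    by (intro exI[of _ "\<lambda>h. p h * q h"] exI[of _ "max N M"]) (use 1 2 in \<open>auto intro: polyf.intros\<close>)
qed

lemma EP_const: "EP r (\<lambda>h. c)"
  by (rule EP_poly) (rule pconst)

lemma EP_diff: "EP r f \<Longrightarrow> EP r g \<Longrightarrow> EP r (\<lambda>h. f h - g h)"
proof -
  assume "EP r f" "EP r g"
  then have "EP r (\<lambda>h. f h + (-1) * g h)" by (rule EP_add[OF _ EP_mul[OF EP_const]])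
  then show ?thesis by simp
qed

lemma EP_sum: "finite S \<Longrightarrow> (\<forall>s\<in>S. EP r (f s)) \<Longrightarrow> EP r (\<lambda>h. \<Sum>s\<in>S. f s h)"
proof (induction S rule: finite_induct)
  case empty
  then show ?case using EP_const[of r 0] by simp
next
  case (insert x F)
  then have "EP r (\<lambda>h. f x h + (\<Sum>s\<in>F. f s h))" by (intro EP_add[of r "f x"]) auto
  then show ?case using insert by simp
qed

lemma EP_shift:
  assumes "EP r f"
  shows "EP r (\<lambda>h. f (\<lambda>i. h i - d i))"
proof -
  obtain p N where p: "polyf r p" "\<And>h. (\<forall>i<r. N \<le> h i) \<Longrightarrow> f h = p h"
    using assms unfolding EP_def by blast
  obtain q where q: "polyf r q" "\<And>h. (\<forall>i<r. d i \<le> h i) \<Longrightarrow> p (\<lambda>i. h i - d i) = q h"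
    using polyf_shift[OF p(1), of d] by blast
  define D where "D = (\<Sum>i<r. d i)"
  have dD: "d i \<le> D" if "i < r" for i
    unfolding D_def using that by (intro member_le_sum) auto
  have "f (\<lambda>i. h i - d i) = q h" if h: "\<forall>i<r. N + D \<le> h i" for h
  proof -
    have 1: "\<forall>i<r. N \<le> h i - d i"
    proof (intro allI impI)
      fix i assume "i < r" then have "N + D \<le> h i" "d i \<le> D" using h dD by auto
      then show "N \<le> h i - d i" by linarith
    qed
    have 2: "\<forall>i<r. d i \<le> h i"
    proof (intro allI impI)
      fix i assume "i < r" then have "N + D \<le> h i" "d i \<le> D" using h dD by auto
      then show "d i \<le> h i" by linarith
    qed
    have "f (\<lambda>i. h i - d i) = p (\<lambda>i. h i - d i)" using p(2)[OF 1] by simp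
    also have "\<dots> = q h" using q(2)[OF 2] .
    finally show ?thesis .
  qed
  then show ?thesis unfolding EP_def using q(1) by (intro exI[of _ q] exI[of _ "N + D"]) auto
qed

lemma EP_is_poly:
  assumes "EP r f"
  shows "\<exists>p. is_poly_fun r p \<and> (\<exists>N. \<forall>h. (\<forall>i<r. N \<le> h i) \<longrightarrow> f h = p h)"
  using assms polyf_is_poly unfolding EP_def by metis


definition Cm :: "nat \<Rightarrow> nat \<Rightarrow> (nat \<Rightarrow> nat) set" where
  "Cm k t = {y. (\<forall>j\<ge>k. y j = 0) \<and> (\<Sum>j<k. y j) = t}"

lemma finite_Cm: "finite (Cm k t)"
proof -
  have "Cm k t \<subseteq> {y. \<forall>j. (j \<in> {..<k} \<longrightarrow> y j \<in> {..t}) \<and> (j \<notin> {..<k} \<longrightarrow> y j = 0)}"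
  proof
    fix y assume y: "y \<in> Cm k t"
    have "y j \<le> t" if "j < k" for j
    proof -
      have "y j \<le> (\<Sum>j<k. y j)" using that by (intro member_le_sum) auto
      then show ?thesis using y by (simp add: Cm_def)
    qed
    then show "y \<in> {y. \<forall>j. (j \<in> {..<k} \<longrightarrow> y j \<in> {..t}) \<and> (j \<notin> {..<k} \<longrightarrow> y j = 0)}"
      using y by (auto simp: Cm_def)
  qed
  moreover have "finite {y. \<forall>j. (j \<in> {..<k} \<longrightarrow> y j \<in> {..t}) \<and> (j \<notin> {..<k} \<longrightarrow> (y j::nat) = 0)}"
    by (rule finite_set_of_finite_funs) auto
  ultimately show ?thesis by (rule finite_subset)
qed

lemma card_Cm_Suc: "card (Cm (Suc k) t) = (\<Sum>s\<le>t. card (Cm k s))"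
proof -
  have "bij_betw (\<lambda>y. (t - y k, y(k := 0))) (Cm (Suc k) t) (SIGMA s:{..t}. Cm k s)"
    apply (rule bij_betw_byWitness[where f'="\<lambda>(s, z). z(k := t - s)"])
    subgoal by (auto simp: Cm_def)
    subgoal by (auto simp: Cm_def)
    subgoal
    proof clarify
      fix y assume y: "y \<in> Cm (Suc k) t"
      then have s: "(\<Sum>j<k. y j) + y k = t" by (simp add: Cm_def)
      have "(\<Sum>j<k. (y(k := 0)) j) = (\<Sum>j<k. y j)" by (rule sum.cong) auto
      then show "t - y k \<in> {..t} \<and> y(k := 0) \<in> Cm k (t - y k)"
        using y s by (auto simp: Cm_def)
    qed
    subgoal
    proof (rule subsetI)
      fix w assume "w \<in> (\<lambda>(s, z). z(k := t - s)) ` (SIGMA s:{..t}. Cm k s)"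
      then obtain s z where w: "w = z(k := t - s)" "s \<le> t" "z \<in> Cm k s" by auto
      have "(\<Sum>j<k. (z(k := t - s)) j) = (\<Sum>j<k. z j)" by (rule sum.cong) auto
      then show "w \<in> Cm (Suc k) t" using w by (auto simp: Cm_def)
    qed
    done
  then have "card (Cm (Suc k) t) = card (SIGMA s:{..t}. Cm k s)" by (rule bij_betw_same_card)
  also have "\<dots> = (\<Sum>s\<le>t. card (Cm k s))" by (simp add: finite_Cm)
  finally show ?thesis .
qed

lemma card_Cm: "card (Cm (Suc k) t) = (k + t) choose t"
proof (induction k arbitrary: t)
  case 0
  have "Cm (Suc 0) t = {(\<lambda>j. 0)(0 := t)}" unfolding Cm_def by (auto simp: fun_eq_iff)
  then show ?case by simp
next
  case (Suc k)
  show ?case using card_Cm_Suc[of "Suc k" t] Suc by (simp add: sum_choose_lower)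
qed

lemma binom_real: "real ((t + K) choose K) = (\<Prod>s<K. real t + real s + 1) / fact K"
proof (induction K)
  case 0
  then show ?case by simp
next
  case (Suc K)
  have e: "Suc K * ((t + Suc K) choose Suc K) = Suc (t + K) * ((t + K) choose K)"
    using Suc_times_binomial[of K "t + K"] by simp
  have "real (Suc K) * real ((t + Suc K) choose Suc K) = real (Suc (t + K)) * real ((t + K) choose K)"
    using arg_cong[OF e, of real] by (simp only: of_nat_mult)
  then have "real ((t + Suc K) choose Suc K) = real (Suc (t + K)) * real ((t + K) choose K) / real (Suc K)"
    by (simp add: field_simps del: of_nat_Suc)
  also have "\<dots> = (\<Prod>s<Suc K. real t + real s + 1) / fact (Suc K)"
    unfolding Suc by (simp add: field_simps)
  finally show ?case .
qed

definition XX :: "nat \<Rightarrow> (nat \<Rightarrow> nat) \<Rightarrow> (nat \<Rightarrow> nat \<Rightarrow> nat) set" where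
  "XX r k = {x. \<forall>i j. (r \<le> i \<or> k i \<le> j) \<longrightarrow> x i j = 0}"

definition dg :: "(nat \<Rightarrow> nat) \<Rightarrow> (nat \<Rightarrow> nat \<Rightarrow> nat) \<Rightarrow> nat \<Rightarrow> nat" where
  "dg k x i = (\<Sum>j<k i. x i j)"

definition LL :: "nat \<Rightarrow> (nat \<Rightarrow> nat) \<Rightarrow> (nat \<Rightarrow> nat) \<Rightarrow> (nat \<Rightarrow> nat \<Rightarrow> nat) set" where
  "LL r k h = {x \<in> XX r k. \<forall>i<r. dg k x i = h i}"

lemma LL_bij: "bij_betw (\<lambda>x. restrict x {..<r}) (LL r k h) (\<Pi>\<^sub>E i\<in>{..<r}. Cm (k i) (h i))"
proof (rule bij_betw_byWitness[where f'="\<lambda>F i. if i < r then F i else (\<lambda>_. 0)"])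
  show "\<forall>a\<in>LL r k h. (\<lambda>F i. if i < r then F i else (\<lambda>_. 0)) (restrict a {..<r}) = a"
    by (auto simp: LL_def XX_def fun_eq_iff)
  show "\<forall>a'\<in>\<Pi>\<^sub>E i\<in>{..<r}. Cm (k i) (h i). restrict ((\<lambda>F i. if i < r then F i else (\<lambda>_. 0)) a') {..<r} = a'"
    by (auto simp: fun_eq_iff PiE_def extensional_def)
  show "(\<lambda>x. restrict x {..<r}) ` LL r k h \<subseteq> (\<Pi>\<^sub>E i\<in>{..<r}. Cm (k i) (h i))"
    by (auto simp: LL_def XX_def Cm_def dg_def)
  show "(\<lambda>F i. if i < r then F i else (\<lambda>_. 0)) ` (\<Pi>\<^sub>E i\<in>{..<r}. Cm (k i) (h i)) \<subseteq> LL r k h"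
    by (auto simp: LL_def XX_def Cm_def dg_def PiE_def Pi_def)
qed

lemma finite_LL: "finite (LL r k h)"
  using bij_betw_finite[OF LL_bij] by (simp add: finite_PiE finite_Cm)

lemma card_LL: "card (LL r k h) = (\<Prod>i<r. card (Cm (k i) (h i)))"
  using bij_betw_same_card[OF LL_bij] by (simp add: card_PiE)

lemma polyf_card_LL:
  assumes "\<forall>i<r. 1 \<le> k i"
  shows "polyf r (\<lambda>h. real (card (LL r k h)))"
proof -
  have "real (card (LL r k h)) = (\<Prod>i<r. (\<Prod>s<k i - 1. real (h i) + real s + 1) * (1 / fact (k i - 1)))" for h
  proof -
    have "real (card (LL r k h)) = (\<Prod>i<r. real (card (Cm (k i) (h i))))"
      by (simp add: card_LL)
    also have "\<dots> = (\<Prod>i<r. (\<Prod>s<k i - 1. real (h i) + real s + 1) * (1 / fact (k i - 1)))"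
    proof (rule prod.cong[OF refl])
      fix i assume "i \<in> {..<r}"
      then have "k i = Suc (k i - 1)" using assms by auto
      then have "card (Cm (k i) (h i)) = (h i + (k i - 1)) choose (k i - 1)"
        using card_Cm[of "k i - 1" "h i"] binomial_symmetric[of "h i" "k i - 1 + h i"]
        by (simp add: add.commute)
      then show "real (card (Cm (k i) (h i))) = (\<Prod>s<k i - 1. real (h i) + real s + 1) * (1 / fact (k i - 1))"
        by (simp add: binom_real)
    qed
    finally show ?thesis .
  qed
  moreover have "polyf r (\<lambda>h. \<Prod>i<r. (\<Prod>s<k i - 1. real (h i) + real s + 1) * (1 / fact (k i - 1)))"
    by (intro polyf_prod ballI polyf.intros) auto
  ultimately show ?thesis by simp
qed


lemma ramsey_seq:
  fixes s :: "nat \<Rightarrow> 'p \<Rightarrow> nat"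
  assumes "finite S"
  shows "infinite Z \<Longrightarrow> \<exists>Y\<subseteq>Z. infinite Y \<and> (\<forall>a\<in>Y. \<forall>b\<in>Y. a < b \<longrightarrow> (\<forall>p\<in>S. s a p \<le> s b p))"
  using assms
proof (induction S arbitrary: Z rule: finite_induct)
  case empty
  then show ?case by blast
next
  case (insert p S)
  obtain Y1 where Y1: "Y1 \<subseteq> Z" "infinite Y1" "\<forall>a\<in>Y1. \<forall>b\<in>Y1. a < b \<longrightarrow> (\<forall>p\<in>S. s a p \<le> s b p)"
    using insert.IH[OF insert.prems] by blast
  define col where "col X = (if s (Min X) p \<le> s (Max X) p then 1 else 0::nat)" for X
  have "\<forall>x\<in>Y1. \<forall>y\<in>Y1. x \<noteq> y \<longrightarrow> col {x, y} < 2" by (simp add: col_def)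
  from Ramsey2[OF Y1(2) this] obtain Y t where Y: "Y \<subseteq> Y1" "infinite Y" "t < 2"
    "\<forall>x\<in>Y. \<forall>y\<in>Y. x \<noteq> y \<longrightarrow> col {x, y} = t" by (elim exE conjE)
  have colab: "col {a, b} = (if s a p \<le> s b p then 1 else 0)" if "a < b" for a b
    using that by (simp add: col_def min_def max_def)
  show ?case
  proof (cases "t = 1")
    case True
    have "\<forall>a\<in>Y. \<forall>b\<in>Y. a < b \<longrightarrow> (\<forall>q\<in>insert p S. s a q \<le> s b q)"
    proof (intro ballI impI)
      fix a b q assume ab: "a \<in> Y" "b \<in> Y" "a < b" and q: "q \<in> insert p S"
      have "a \<noteq> b" using ab(3) by simp
      then have "col {a, b} = t" using Y(4) ab(1,2) by blast
      then have "col {a, b} = 1" using True by simp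
      then have "(if s a p \<le> s b p then 1 else 0::nat) = 1" unfolding colab[OF ab(3)] .
      then have 1: "s a p \<le> s b p" by (cases "s a p \<le> s b p") auto
      have "a \<in> Y1" "b \<in> Y1" using ab(1,2) Y(1) by (auto simp: subset_iff)
      then have 2: "\<forall>q\<in>S. s a q \<le> s b q" using Y1(3) ab(3) by blast
      show "s a q \<le> s b q" using q 1 2 by (cases "q = p") auto
    qed
    moreover have "Y \<subseteq> Z" using Y(1) Y1(1) by (rule order_trans)
    ultimately show ?thesis using Y(2) by (intro exI[of _ Y]) simp
  next
    case False
    then have t0: "t = 0" using Y(3) by auto
    have dec: "s b p < s a p" if "a \<in> Y" "b \<in> Y" "a < b" for a b
    proof -
      have "a \<noteq> b" using that(3) by simp
      then have "col {a, b} = t" using Y(4) that(1,2) by blast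
      then have "(if s a p \<le> s b p then 1 else 0::nat) = 0" unfolding colab[OF that(3)] t0 .
      then show ?thesis by (cases "s a p \<le> s b p") auto
    qed
    obtain a1 where "a1 \<in> Y" using Y(2) by (metis finite.emptyI ex_in_conv)
    then obtain a0 where a0: "a0 \<in> Y" "\<forall>a. a \<in> Y \<longrightarrow> s a0 p \<le> s a p"
      using ex_has_least_nat[of "\<lambda>a. a \<in> Y" a1 "\<lambda>a. s a p"] by blast
    obtain b where b: "b > a0" "b \<in> Y" using Y(2) unfolding infinite_nat_iff_unbounded by blast
    have "s b p < s a0 p" using dec[OF a0(1) b(2) b(1)] .
    moreover have "s a0 p \<le> s b p" using a0(2) b(2) by blast
    ultimately show ?thesis by simp
  qed
qed

definition Sig :: "nat \<Rightarrow> (nat \<Rightarrow> nat) \<Rightarrow> (nat \<times> nat) set" where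
  "Sig r k = (SIGMA i:{..<r}. {..<k i})"

lemma finite_Sig: "finite (Sig r k)"
  unfolding Sig_def by auto

lemma XX_out: "x \<in> XX r k \<Longrightarrow> (i, j) \<notin> Sig r k \<Longrightarrow> x i j = 0"
  unfolding XX_def Sig_def by auto

lemma dickson:
  assumes U: "U \<subseteq> XX r k"
  shows "\<exists>M. finite M \<and> M \<subseteq> U \<and> (\<forall>x\<in>U. \<exists>m\<in>M. \<forall>i j. m i j \<le> x i j)"
proof -
  define Mn where "Mn = {x \<in> U. \<forall>y\<in>U. (\<forall>i j. y i j \<le> x i j) \<longrightarrow> y = x}"
  define wt where "wt x = (\<Sum>p\<in>Sig r k. x (fst p) (snd p))" for x :: "nat \<Rightarrow> nat \<Rightarrow> nat"
  have below: "\<exists>m\<in>Mn. \<forall>i j. m i j \<le> x i j" if "x \<in> U" for x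
    using that
  proof (induction "wt x" arbitrary: x rule: less_induct)
    case less
    show ?case
    proof (cases "x \<in> Mn")
      case True
      then show ?thesis by blast
    next
      case False
      then obtain y where y: "y \<in> U" "\<forall>i j. y i j \<le> x i j" "y \<noteq> x"
        using less.prems unfolding Mn_def by blast
      then obtain i j where ij: "y i j \<noteq> x i j" by (auto simp: fun_eq_iff)
      have xy: "x \<in> XX r k" "y \<in> XX r k" using y(1) less.prems U by auto
      have "(i, j) \<in> Sig r k"
      proof (rule ccontr)
        assume "(i, j) \<notin> Sig r k"
        then show False using ij XX_out[OF xy(1)] XX_out[OF xy(2)] by metis
      qed
      then have "wt y < wt x" unfolding wt_def
        using y(2) ij by (intro sum_strict_mono_ex1 finite_Sig) (auto intro!: bexI[of _ "(i, j)"] simp: le_neq_implies_less)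
      from less.hyps[OF this y(1)] obtain m where "m \<in> Mn" "\<forall>i j. m i j \<le> y i j" by blast
      then show ?thesis using y(2) le_trans by blast
    qed
  qed
  have "finite Mn"
  proof (rule ccontr)
    assume "infinite Mn"
    then obtain sq :: "nat \<Rightarrow> _" where sq: "inj sq" "range sq \<subseteq> Mn"
      unfolding infinite_iff_countable_subset by blast
    obtain Y where Y: "infinite Y" "\<forall>a\<in>Y. \<forall>b\<in>Y. a < b \<longrightarrow> (\<forall>p\<in>Sig r k. sq a (fst p) (snd p) \<le> sq b (fst p) (snd p))"
      using ramsey_seq[OF finite_Sig[of r k], where Z=UNIV and s="\<lambda>a p. sq a (fst p) (snd p)"] by auto
    obtain a where a: "a \<in> Y" using Y(1) by (metis finite.emptyI ex_in_conv)
    obtain b where b: "b > a" "b \<in> Y" using Y(1) unfolding infinite_nat_iff_unbounded by blast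
    have inU: "sq a \<in> U" "sq b \<in> U" "sq b \<in> Mn" using sq(2) Mn_def by auto
    have "\<forall>i j. sq a i j \<le> sq b i j"
    proof (intro allI)
      fix i j
      show "sq a i j \<le> sq b i j"
      proof (cases "(i, j) \<in> Sig r k")
        case True
        then show ?thesis using Y(2) a b by fastforce
      next
        case False
        then show ?thesis using XX_out[of "sq a" r k i j] inU U by auto
      qed
    qed
    then have "sq a = sq b" using inU unfolding Mn_def by blast
    then show False using sq(1) b(1) by (auto dest: injD)
  qed
  then show ?thesis using below by (intro exI[of _ Mn]) (auto simp: Mn_def)
qed


definition upc :: "nat \<Rightarrow> (nat \<Rightarrow> nat) \<Rightarrow> (nat \<Rightarrow> nat \<Rightarrow> nat) \<Rightarrow> (nat \<Rightarrow> nat \<Rightarrow> nat) set" where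
  "upc r k m = {x \<in> XX r k. \<forall>i j. m i j \<le> x i j}"

lemma card_upc_LL:
  assumes m: "m \<in> XX r k" and h: "\<forall>i<r. dg k m i \<le> h i"
  shows "card (upc r k m \<inter> LL r k h) = card (LL r k (\<lambda>i. h i - dg k m i))"
proof -
  have "bij_betw (\<lambda>x i j. x i j - m i j) (upc r k m \<inter> LL r k h) (LL r k (\<lambda>i. h i - dg k m i))"
  proof (rule bij_betw_byWitness[where f'="\<lambda>y i j. y i j + m i j"])
    show "\<forall>a\<in>upc r k m \<inter> LL r k h. (\<lambda>i j. a i j - m i j + m i j) = a"
      by (auto simp: upc_def fun_eq_iff)
    show "\<forall>a'\<in>LL r k (\<lambda>i. h i - dg k m i). (\<lambda>i j. a' i j + m i j - m i j) = a'"
      by (auto simp: fun_eq_iff)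
    show "(\<lambda>x i j. x i j - m i j) ` (upc r k m \<inter> LL r k h) \<subseteq> LL r k (\<lambda>i. h i - dg k m i)"
    proof
      fix w assume "w \<in> (\<lambda>x i j. x i j - m i j) ` (upc r k m \<inter> LL r k h)"
      then obtain x where x: "w = (\<lambda>i j. x i j - m i j)" "x \<in> upc r k m" "x \<in> LL r k h" by blast
      have "w \<in> XX r k" using x by (auto simp: XX_def upc_def)
      moreover have "dg k w i = h i - dg k m i" if "i < r" for i
      proof -
        have "dg k w i = dg k x i - dg k m i"
          unfolding dg_def x(1) using x(2) by (intro sum_subtractf_nat) (auto simp: upc_def)
        then show ?thesis using x(3) that by (auto simp: LL_def)
      qed
      ultimately show "w \<in> LL r k (\<lambda>i. h i - dg k m i)" by (auto simp: LL_def)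
    qed
    show "(\<lambda>y i j. y i j + m i j) ` LL r k (\<lambda>i. h i - dg k m i) \<subseteq> upc r k m \<inter> LL r k h"
    proof
      fix w assume "w \<in> (\<lambda>y i j. y i j + m i j) ` LL r k (\<lambda>i. h i - dg k m i)"
      then obtain y where y: "w = (\<lambda>i j. y i j + m i j)" "y \<in> LL r k (\<lambda>i. h i - dg k m i)" by blast
      have "w \<in> XX r k" using y m by (auto simp: XX_def LL_def)
      moreover have "dg k w i = h i" if "i < r" for i
      proof -
        have "dg k w i = dg k y i + dg k m i"
          unfolding dg_def y(1) by (simp add: sum.distrib)
        then show ?thesis using y(2) h that by (auto simp: LL_def)
      qed
      ultimately show "w \<in> upc r k m \<inter> LL r k h" using y(1) by (auto simp: LL_def upc_def)
    qed
  qed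
  then show ?thesis by (rule bij_betw_same_card)
qed

lemma EP_upc:
  assumes k: "\<forall>i<r. 1 \<le> k i" and m: "m \<in> XX r k"
  shows "EP r (\<lambda>h. real (card (upc r k m \<inter> LL r k h)))"
proof -
  have "EP r (\<lambda>h. real (card (LL r k (\<lambda>i. h i - dg k m i))))"
    using EP_shift[OF EP_poly[OF polyf_card_LL[OF k]], of "dg k m"] by simp
  moreover have "\<forall>h. (\<forall>i<r. (\<Sum>i<r. dg k m i) \<le> h i) \<longrightarrow>
      real (card (upc r k m \<inter> LL r k h)) = real (card (LL r k (\<lambda>i. h i - dg k m i)))"
  proof (intro allI impI)
    fix h assume h: "\<forall>i<r. (\<Sum>i<r. dg k m i) \<le> h i"
    have "\<forall>i<r. dg k m i \<le> h i"
    proof (intro allI impI)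
      fix i assume "i < r"
      then have "dg k m i \<le> (\<Sum>i<r. dg k m i)" by (intro member_le_sum) auto
      then show "dg k m i \<le> h i" using h \<open>i < r\<close> by (meson le_trans)
    qed
    then show "real (card (upc r k m \<inter> LL r k h)) = real (card (LL r k (\<lambda>i. h i - dg k m i)))"
      using card_upc_LL[OF m] by simp
  qed
  ultimately show ?thesis by (rule EP_cong)
qed

definition mx :: "(nat \<Rightarrow> nat \<Rightarrow> nat) \<Rightarrow> (nat \<Rightarrow> nat \<Rightarrow> nat) \<Rightarrow> (nat \<Rightarrow> nat \<Rightarrow> nat)" where
  "mx m m' = (\<lambda>i j. max (m i j) (m' i j))"

lemma upc_Int: "upc r k m \<inter> upc r k m' = upc r k (mx m m')"
  by (auto simp: upc_def mx_def)

lemma mx_XX: "m \<in> XX r k \<Longrightarrow> m' \<in> XX r k \<Longrightarrow> mx m m' \<in> XX r k"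
  by (auto simp: XX_def mx_def)

lemma EP_union:
  assumes k: "\<forall>i<r. 1 \<le> k i"
  shows "finite M \<Longrightarrow> M \<subseteq> XX r k \<Longrightarrow> EP r (\<lambda>h. real (card (\<Union>m\<in>M. upc r k m \<inter> LL r k h)))"
proof (induction "card M" arbitrary: M rule: less_induct)
  case less
  show ?case
  proof (cases "M = {}")
    case True
    then show ?thesis using EP_const[of r 0] by simp
  next
    case False
    then obtain m where mM: "m \<in> M" by blast
    define M' where "M' = M - {m}"
    have M: "M = insert m M'" "m \<notin> M'" using mM by (auto simp: M'_def)
    have cM': "card M' < card M" using less.prems mM unfolding M'_def by (intro psubset_card_mono) auto
    have fM': "finite M'" "M' \<subseteq> XX r k" using less.prems by (auto simp: M'_def)
    have mX: "m \<in> XX r k" using less.prems mM by auto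
    define M'' where "M'' = mx m ` M'"
    have fM'': "finite M''" "M'' \<subseteq> XX r k" using fM' mX by (auto simp: M''_def intro: mx_XX)
    have cM'': "card M'' < card M" using cM' fM' unfolding M''_def by (meson card_image_le le_less_trans)
    have IH1: "EP r (\<lambda>h. real (card (\<Union>m\<in>M'. upc r k m \<inter> LL r k h)))"
      using less.hyps[OF cM' fM'] .
    have IH2: "EP r (\<lambda>h. real (card (\<Union>m\<in>M''. upc r k m \<inter> LL r k h)))"
      using less.hyps[OF cM'' fM''] .
    have e: "real (card (\<Union>m\<in>M. upc r k m \<inter> LL r k h)) =
      real (card (upc r k m \<inter> LL r k h)) + real (card (\<Union>m\<in>M'. upc r k m \<inter> LL r k h))
       - real (card (\<Union>m\<in>M''. upc r k m \<inter> LL r k h))" for h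
    proof -
      define F where "F = upc r k m \<inter> LL r k h"
      define W where "W = (\<Union>m\<in>M'. upc r k m \<inter> LL r k h)"
      have U: "(\<Union>m\<in>M. upc r k m \<inter> LL r k h) = F \<union> W" unfolding F_def W_def M by auto
      have I: "F \<inter> W = (\<Union>m\<in>M''. upc r k m \<inter> LL r k h)"
        unfolding F_def W_def M''_def by (auto simp: upc_Int[symmetric])
      have fin: "finite F" "finite W" unfolding F_def W_def
        by (auto intro: finite_subset[OF _ finite_LL])
      have "card F + card W = card (F \<union> W) + card (F \<inter> W)" by (rule card_Un_Int[OF fin])
      then have "real (card F) + real (card W) = real (card (F \<union> W)) + real (card (F \<inter> W))"
        by (metis of_nat_add)
      then show ?thesis unfolding U I[symmetric] F_def[symmetric] W_def[symmetric] by simp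
    qed
    have "EP r (\<lambda>h. real (card (upc r k m \<inter> LL r k h)) + real (card (\<Union>m\<in>M'. upc r k m \<inter> LL r k h))
       - real (card (\<Union>m\<in>M''. upc r k m \<inter> LL r k h)))"
      by (rule EP_diff[OF EP_add[OF EP_upc[OF k mX] IH1] IH2])
    then show ?thesis using e by simp
  qed
qed

lemma count_EP:
  assumes k: "\<forall>i<r. 1 \<le> k i" and U: "U \<subseteq> XX r k"
    and up: "\<forall>x\<in>U. \<forall>z\<in>XX r k. (\<forall>i j. x i j \<le> z i j) \<longrightarrow> z \<in> U"
  shows "EP r (\<lambda>h. real (card (LL r k h - U)))"
proof -
  obtain M where M: "finite M" "M \<subseteq> U" "\<forall>x\<in>U. \<exists>m\<in>M. \<forall>i j. m i j \<le> x i j"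
    using dickson[OF U] by blast
  have eq: "LL r k h \<inter> U = (\<Union>m\<in>M. upc r k m \<inter> LL r k h)" for h
  proof
    show "LL r k h \<inter> U \<subseteq> (\<Union>m\<in>M. upc r k m \<inter> LL r k h)"
    proof
      fix x assume x: "x \<in> LL r k h \<inter> U"
      then obtain m where "m \<in> M" "\<forall>i j. m i j \<le> x i j" using M(3) by blast
      then show "x \<in> (\<Union>m\<in>M. upc r k m \<inter> LL r k h)" using x by (auto simp: upc_def LL_def)
    qed
    show "(\<Union>m\<in>M. upc r k m \<inter> LL r k h) \<subseteq> LL r k h \<inter> U"
    proof
      fix x assume "x \<in> (\<Union>m\<in>M. upc r k m \<inter> LL r k h)"
      then obtain m where m: "m \<in> M" "x \<in> upc r k m" "x \<in> LL r k h" by blast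
      have "m \<in> U" using m(1) M(2) by blast
      moreover have "x \<in> XX r k" "\<forall>i j. m i j \<le> x i j" using m(2) by (auto simp: upc_def)
      ultimately have "x \<in> U" using up by blast
      then show "x \<in> LL r k h \<inter> U" using m(3) by blast
    qed
  qed
  have e: "real (card (LL r k h - U)) = real (card (LL r k h)) - real (card (\<Union>m\<in>M. upc r k m \<inter> LL r k h))" for h
  proof -
    have fin: "finite (LL r k h \<inter> U)" using finite_LL by blast
    have "card (LL r k h \<inter> U) \<le> card (LL r k h)" by (rule card_mono[OF finite_LL]) blast
    then show ?thesis unfolding card_Diff_subset_Int[OF fin] eq[symmetric] by (simp add: of_nat_diff)
  qed
  have MX: "M \<subseteq> XX r k" using M(2) U by blast
  have "EP r (\<lambda>h. real (card (LL r k h)) - real (card (\<Union>m\<in>M. upc r k m \<inter> LL r k h)))"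
    by (rule EP_diff[OF EP_poly[OF polyf_card_LL[OF k]] EP_union[OF k M(1) MX]])
  then show ?thesis using e by simp
qed


definition nsm :: "nat \<Rightarrow> 'a::comm_monoid_add \<Rightarrow> 'a" where
  "nsm t a = sum_list (replicate t a)"

lemma nsm_add: "nsm (t + s) a = nsm t a + nsm s a"
  by (simp add: nsm_def replicate_add)

lemma nsm_0[simp]: "nsm 0 a = 0" and nsm_1: "nsm 1 a = a"
  by (simp_all add: nsm_def)

lemma list_count:
  fixes xs :: "'a::comm_monoid_add list"
  assumes "finite A" "set xs \<subseteq> A"
  shows "sum_list xs = (\<Sum>a\<in>A. nsm (count_list xs a) a) \<and> length xs = (\<Sum>a\<in>A. count_list xs a)"
  using assms(2)
proof (induction xs)
  case Nil
  then show ?case by simp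
next
  case (Cons x xs)
  then have IH: "sum_list xs = (\<Sum>a\<in>A. nsm (count_list xs a) a)" "length xs = (\<Sum>a\<in>A. count_list xs a)"
    and xA: "x \<in> A" by auto
  have 1: "nsm (count_list (x # xs) a) a = nsm (count_list xs a) a + (if x = a then a else 0)" for a
    by (simp add: nsm_def add.commute)
  have 2: "count_list (x # xs) a = count_list xs a + (if x = a then 1 else 0)" for a
    by simp
  have "(\<Sum>a\<in>A. nsm (count_list (x # xs) a) a) = (\<Sum>a\<in>A. nsm (count_list xs a) a) + x"
    unfolding 1 sum.distrib using xA assms(1) by (simp add: sum.delta)
  moreover have "(\<Sum>a\<in>A. count_list (x # xs) a) = (\<Sum>a\<in>A. count_list xs a) + 1"
    unfolding 2 sum.distrib using xA assms(1) by (simp add: sum.delta)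
  ultimately show ?case using IH by (simp add: add.commute)
qed

lemma sum_list_concat': "sum_list (concat xss) = sum_list (map sum_list (xss :: 'a::comm_monoid_add list list))"
  by (induction xss) auto

lemma hfold_char:
  fixes A :: "'a::comm_monoid_add set" and k :: nat
  assumes fA: "finite A" and g: "bij_betw g {..<k} A"
  shows "hfold_sumset h A = {(\<Sum>j<k. nsm (y j) (g j)) | y. (\<Sum>j<k. y j) = h}"
proof
  show "hfold_sumset h A \<subseteq> {(\<Sum>j<k. nsm (y j) (g j)) | y. (\<Sum>j<k. y j) = h}"
  proof
    fix s assume "s \<in> hfold_sumset h A"
    then obtain xs where xs: "s = sum_list xs" "length xs = h" "set xs \<subseteq> A"
      unfolding hfold_sumset_def by blast
    define y where "y j = count_list xs (g j)" for j
    have "sum_list xs = (\<Sum>a\<in>A. nsm (count_list xs a) a)" "length xs = (\<Sum>a\<in>A. count_list xs a)"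
      using list_count[OF fA xs(3)] by auto
    moreover have "(\<Sum>a\<in>A. nsm (count_list xs a) a) = (\<Sum>j<k. nsm (y j) (g j))"
      unfolding y_def using sum.reindex_bij_betw[OF g, of "\<lambda>a. nsm (count_list xs a) a"] by simp
    moreover have "(\<Sum>a\<in>A. count_list xs a) = (\<Sum>j<k. y j)"
      unfolding y_def using sum.reindex_bij_betw[OF g, of "\<lambda>a. count_list xs a"] by simp
    ultimately show "s \<in> {(\<Sum>j<k. nsm (y j) (g j)) | y. (\<Sum>j<k. y j) = h}"
      using xs by auto
  qed
  show "{(\<Sum>j<k. nsm (y j) (g j)) | y. (\<Sum>j<k. y j) = h} \<subseteq> hfold_sumset h A"
  proof
    fix s assume "s \<in> {(\<Sum>j<k. nsm (y j) (g j)) | y. (\<Sum>j<k. y j) = h}"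
    then obtain y where y: "s = (\<Sum>j<k. nsm (y j) (g j))" "(\<Sum>j<k. y j) = h" by blast
    define xs where "xs = concat (map (\<lambda>j. replicate (y j) (g j)) [0..<k])"
    have "length xs = sum_list (map y [0..<k])"
      unfolding xs_def by (simp add: length_concat comp_def)
    also have "\<dots> = (\<Sum>j<k. y j)"
      by (simp add: sum_set_upt_conv_sum_list_nat[symmetric] atLeast0LessThan)
    finally have len: "length xs = h" using y(2) by simp
    have "sum_list xs = sum_list (map (\<lambda>j. nsm (y j) (g j)) [0..<k])"
      unfolding xs_def nsm_def by (simp add: sum_list_concat' comp_def)
    also have "\<dots> = s"
      using y(1) by (simp add: sum_set_upt_conv_sum_list_nat[symmetric] atLeast0LessThan)
    finally have sm: "sum_list xs = s" .
    have "set xs \<subseteq> A" unfolding xs_def using bij_betwE[OF g] by auto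
    then show "s \<in> hfold_sumset h A" unfolding hfold_sumset_def using len sm by blast
  qed
qed

definition vl :: "nat \<Rightarrow> (nat \<Rightarrow> nat) \<Rightarrow> (nat \<Rightarrow> nat \<Rightarrow> 'a::comm_monoid_add) \<Rightarrow> (nat \<Rightarrow> nat \<Rightarrow> nat) \<Rightarrow> 'a" where
  "vl r k e x = (\<Sum>i<r. \<Sum>j<k i. nsm (x i j) (e i j))"

lemma vl_add: "vl r k e (\<lambda>i j. x i j + z i j) = vl r k e x + vl r k e z"
  unfolding vl_def by (simp add: nsm_add sum.distrib)

lemma multi_char:
  fixes A :: "nat \<Rightarrow> 'a::comm_monoid_add set"
  assumes fA: "\<forall>i<r. finite (A i)" and e: "\<forall>i<r. bij_betw (e i) {..<k i} (A i)"
  shows "multi_sumset B A h r = {b + vl r k e x | b x. b \<in> B \<and> x \<in> LL r k h}"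
proof
  show "multi_sumset B A h r \<subseteq> {b + vl r k e x | b x. b \<in> B \<and> x \<in> LL r k h}"
  proof
    fix s assume "s \<in> multi_sumset B A h r"
    then obtain b u where bu: "s = b + (\<Sum>i<r. u i)" "b \<in> B" "\<forall>i<r. u i \<in> hfold_sumset (h i) (A i)"
      unfolding multi_sumset_def by blast
    have "\<forall>i. \<exists>y. i < r \<longrightarrow> (u i = (\<Sum>j<k i. nsm (y j) (e i j)) \<and> (\<Sum>j<k i. y j) = h i)"
    proof
      fix i
      show "\<exists>y. i < r \<longrightarrow> (u i = (\<Sum>j<k i. nsm (y j) (e i j)) \<and> (\<Sum>j<k i. y j) = h i)"
      proof (cases "i < r")
        case True
        then have "u i \<in> {(\<Sum>j<k i. nsm (y j) (e i j)) | y. (\<Sum>j<k i. y j) = h i}"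
          using bu(3) hfold_char[of "A i" "e i" "k i" "h i"] fA e by auto
        then show ?thesis by blast
      qed simp
    qed
    then obtain Y where Y: "\<And>i. i < r \<Longrightarrow> u i = (\<Sum>j<k i. nsm (Y i j) (e i j)) \<and> (\<Sum>j<k i. Y i j) = h i"
      by metis
    define x where "x i j = (if i < r \<and> j < k i then Y i j else 0)" for i j
    have "x \<in> XX r k" by (auto simp: XX_def x_def)
    moreover have "dg k x i = h i" if "i < r" for i
      using Y[OF that] that unfolding dg_def x_def by simp
    ultimately have xL: "x \<in> LL r k h" by (simp add: LL_def)
    have "vl r k e x = (\<Sum>i<r. u i)" unfolding vl_def using Y by (simp add: x_def)
    then have "s = b + vl r k e x" using bu(1) by simp
    then show "s \<in> {b + vl r k e x | b x. b \<in> B \<and> x \<in> LL r k h}" using bu(2) xL by blast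
  qed
  show "{b + vl r k e x | b x. b \<in> B \<and> x \<in> LL r k h} \<subseteq> multi_sumset B A h r"
  proof
    fix s assume "s \<in> {b + vl r k e x | b x. b \<in> B \<and> x \<in> LL r k h}"
    then obtain b x where bx: "s = b + vl r k e x" "b \<in> B" "x \<in> LL r k h" by blast
    define u where "u i = (\<Sum>j<k i. nsm (x i j) (e i j))" for i
    have "u i \<in> hfold_sumset (h i) (A i)" if "i < r" for i
    proof -
      have "dg k x i = h i" using bx(3) that by (simp add: LL_def)
      then show ?thesis using hfold_char[of "A i" "e i" "k i" "h i"] fA e that
        by (auto simp: u_def dg_def)
    qed
    moreover have "s = b + (\<Sum>i<r. u i)" using bx(1) by (simp add: vl_def u_def)
    ultimately show "s \<in> multi_sumset B A h r" unfolding multi_sumset_def using bx(2) by blast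
  qed
qed


lemma map_less_add:
  fixes F G H :: "'p \<Rightarrow> nat"
  shows "map F P < map G P \<Longrightarrow> map (\<lambda>p. F p + H p) P < map (\<lambda>p. G p + H p) P"
proof (induction P)
  case Nil
  then show ?case by simp
next
  case (Cons a P)
  then show ?case by auto
qed

lemma dg_add: "dg k (\<lambda>i j. x i j + w i j) i = dg k x i + dg k w i"
  unfolding dg_def by (simp add: sum.distrib)

theorem mainTheorem1:
  fixes A :: "nat \<Rightarrow> 'a::comm_monoid_add set" and B :: "'a set" and r :: nat
  assumes "r \<ge> 1"
    and "\<forall>i<r. finite (A i) \<and> A i \<noteq> {}"
    and "finite B" and "B \<noteq> {}"
  shows "\<exists>p. is_poly_fun r p \<and> (\<exists>N. \<forall>h. (\<forall>i<r. N \<le> h i) \<longrightarrow>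
           real (card (multi_sumset B A h r)) = p h)"
proof -
  define k where "k i = card (A i)" for i
  have "\<forall>i. \<exists>g. i < r \<longrightarrow> bij_betw g {..<k i} (A i)"
  proof
    fix i
    show "\<exists>g. i < r \<longrightarrow> bij_betw g {..<k i} (A i)"
    proof (cases "i < r")
      case True
      then obtain g where "bij_betw g {0..<card (A i)} (A i)"
        using assms(2) ex_bij_betw_nat_finite by blast
      then show ?thesis unfolding k_def by (auto simp: atLeast0LessThan)
    qed simp
  qed
  then obtain e where e: "\<forall>i<r. bij_betw (e i) {..<k i} (A i)" by metis
  have fA: "\<forall>i<r. finite (A i)" using assms(2) by blast
  have k1: "\<forall>i<r. 1 \<le> k i" using assms(2) unfolding k_def by (simp add: Suc_le_eq card_gt_0_iff)
  obtain f :: "'a \<Rightarrow> nat" where f: "inj_on f B"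
    using ex_bij_betw_finite_nat[OF assms(3)] bij_betw_imp_inj_on by blast
  obtain P where setP: "set P = Sig r k" using finite_list[OF finite_Sig] by blast
  define key where "key b x = f b # map (\<lambda>p. x (fst p) (snd p)) P" for b and x :: "nat \<Rightarrow> nat \<Rightarrow> nat"
  have key_inj: "b = b' \<and> x = x'" if "key b x = key b' x'" "b \<in> B" "b' \<in> B" "x \<in> XX r k" "x' \<in> XX r k"
    for b b' x x'
  proof
    show "b = b'" using that(1-3) f unfolding key_def by (auto dest: inj_onD)
    have m: "\<forall>p\<in>Sig r k. x (fst p) (snd p) = x' (fst p) (snd p)"
      using that(1) unfolding key_def setP[symmetric] by (simp add: map_eq_conv)
    show "x = x'"
    proof (intro ext)
      fix i j
      show "x i j = x' i j"
      proof (cases "(i, j) \<in> Sig r k")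
        case True
        then show ?thesis using m by force
      next
        case False
        then show ?thesis using XX_out[OF that(4) False] XX_out[OF that(5) False] by simp
      qed
    qed
  qed
  have key_add: "key b' (\<lambda>i j. y i j + w i j) < key b (\<lambda>i j. x i j + w i j)"
    if "key b' y < key b x" for b b' y x w
  proof -
    have "f b' < f b \<or> f b' = f b \<and> map (\<lambda>p. y (fst p) (snd p)) P < map (\<lambda>p. x (fst p) (snd p)) P"
      using that unfolding key_def by simp
    then show ?thesis unfolding key_def
      using map_less_add[of "\<lambda>p. y (fst p) (snd p)" P "\<lambda>p. x (fst p) (snd p)" "\<lambda>p. w (fst p) (snd p)"]
      by auto
  qed
  define G where "G b = {x \<in> XX r k. \<forall>b'\<in>B. \<forall>y\<in>XX r k. (\<forall>i<r. dg k y i = dg k x i) \<longrightarrow>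
      b' + vl r k e y = b + vl r k e x \<longrightarrow> \<not> key b' y < key b x}" for b
  define U where "U b = XX r k - G b" for b
  have Gd: "\<not> key b' y < key b x" if "x \<in> G b" "b' \<in> B" "y \<in> XX r k" "\<forall>i<r. dg k y i = dg k x i"
    "b' + vl r k e y = b + vl r k e x" for b b' x y
    using that unfolding G_def by blast
  have U_up: "\<forall>x\<in>U b. \<forall>z\<in>XX r k. (\<forall>i j. x i j \<le> z i j) \<longrightarrow> z \<in> U b" for b
  proof (intro ballI impI)
    fix x z assume x: "x \<in> U b" and z: "z \<in> XX r k" and xz: "\<forall>i j. x i j \<le> z i j"
    have xX: "x \<in> XX r k" using x by (simp add: U_def)
    then obtain b' y where y: "b' \<in> B" "y \<in> XX r k" "\<forall>i<r. dg k y i = dg k x i"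
      "b' + vl r k e y = b + vl r k e x" "key b' y < key b x"
      using x unfolding U_def G_def by blast
    define w where "w i j = z i j - x i j" for i j
    have zw: "z = (\<lambda>i j. x i j + w i j)" using xz by (auto simp: w_def fun_eq_iff)
    have wX: "w \<in> XX r k" using z xX by (auto simp: XX_def w_def)
    define y' where "y' = (\<lambda>i j. y i j + w i j)"
    have "y' \<in> XX r k" using y(2) wX by (auto simp: XX_def y'_def)
    moreover have "\<forall>i<r. dg k y' i = dg k z i" unfolding y'_def zw dg_add using y(3) by simp
    moreover have "b' + vl r k e y' = b + vl r k e z"
      unfolding y'_def zw vl_add using y(4) by (metis add.assoc)
    moreover have "key b' y' < key b z" unfolding y'_def zw by (rule key_add[OF y(5)])
    ultimately have "z \<notin> G b" using y(1) unfolding G_def by blast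
    then show "z \<in> U b" using z by (simp add: U_def)
  qed
  have UX: "U b \<subseteq> XX r k" for b by (auto simp: U_def)
  have EPb: "EP r (\<lambda>h. real (card (LL r k h - U b)))" for b
    by (rule count_EP[OF k1 UX U_up])
  have card_eq: "card (multi_sumset B A h r) = (\<Sum>b\<in>B. card (LL r k h - U b))" for h
  proof -
    define R where "R = (SIGMA b:B. LL r k h - U b)"
    have LLX: "LL r k h \<subseteq> XX r k" by (auto simp: LL_def)
    have RG: "(b, x) \<in> R \<longleftrightarrow> b \<in> B \<and> x \<in> LL r k h \<and> x \<in> G b" for b x
      using LLX unfolding R_def U_def by auto
    have MC: "multi_sumset B A h r = {b + vl r k e x | b x. b \<in> B \<and> x \<in> LL r k h}"
      by (rule multi_char[OF fA e])
    have "bij_betw (\<lambda>(b, x). b + vl r k e x) R (multi_sumset B A h r)"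
      unfolding bij_betw_def
    proof
      show "inj_on (\<lambda>(b, x). b + vl r k e x) R"
      proof (rule inj_onI, clarify)
        fix b x b' x'
        assume bx: "(b, x) \<in> R" and bx': "(b', x') \<in> R" and eq: "b + vl r k e x = b' + vl r k e x'"
        have 1: "b \<in> B" "x \<in> LL r k h" "x \<in> G b" using RG bx by auto
        have 2: "b' \<in> B" "x' \<in> LL r k h" "x' \<in> G b'" using RG bx' by auto
        have dgeq: "\<forall>i<r. dg k x' i = dg k x i" using 1(2) 2(2) by (simp add: LL_def)
        have X: "x \<in> XX r k" "x' \<in> XX r k" using 1(2) 2(2) LLX by auto
        have "\<not> key b' x' < key b x" using Gd[OF 1(3) 2(1) X(2) dgeq] eq by simp
        moreover have "\<not> key b x < key b' x'" using Gd[OF 2(3) 1(1) X(1)] dgeq eq by simp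
        ultimately have "key b x = key b' x'" by simp
        then show "b = b' \<and> x = x'" using key_inj 1(1) 2(1) X by blast
      qed
      show "(\<lambda>(b, x). b + vl r k e x) ` R = multi_sumset B A h r"
      proof
        show "(\<lambda>(b, x). b + vl r k e x) ` R \<subseteq> multi_sumset B A h r"
          unfolding MC using RG by auto
        show "multi_sumset B A h r \<subseteq> (\<lambda>(b, x). b + vl r k e x) ` R"
        proof
          fix s assume "s \<in> multi_sumset B A h r"
          then have "\<exists>b0 x0. s = b0 + vl r k e x0 \<and> b0 \<in> B \<and> x0 \<in> LL r k h"
            unfolding MC by simp
          then obtain b0 x0 where bx0: "s = b0 + vl r k e x0" "b0 \<in> B" "x0 \<in> LL r k h"
            by (elim exE conjE)
          define Rep where "Rep = {bx \<in> B \<times> LL r k h. fst bx + vl r k e (snd bx) = s}"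
          have "Rep \<subseteq> B \<times> LL r k h" unfolding Rep_def by (rule subsetI) (simp only: mem_Collect_eq)
          then have fRep: "finite Rep"
            using finite_cartesian_product[OF assms(3) finite_LL] by (rule finite_subset)
          define K where "K = (\<lambda>bx. key (fst bx) (snd bx)) ` Rep"
          have "(b0, x0) \<in> Rep" using bx0 unfolding Rep_def by auto
          then have fK: "finite K" "K \<noteq> {}" using fRep unfolding K_def by auto
          then have "Min K \<in> K" by (rule Min_in)
          then obtain b x where bx: "(b, x) \<in> Rep" "key b x = Min K" unfolding K_def by auto
          have minK: "key b x \<le> key b' y" if "(b', y) \<in> Rep" for b' y
          proof -
            have "key b' y \<in> K" unfolding K_def using that by (intro image_eqI[of _ _ "(b', y)"]) auto
            then show ?thesis unfolding bx(2) by (rule Min_le[OF fK(1)])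
          qed
          have b: "b \<in> B" "x \<in> LL r k h" "b + vl r k e x = s" using bx(1) unfolding Rep_def by auto
          have "x \<in> G b"
            unfolding G_def
          proof (intro CollectI conjI ballI impI)
            show "x \<in> XX r k" using b(2) LLX by auto
            fix b' y assume b': "b' \<in> B" "y \<in> XX r k" "\<forall>i<r. dg k y i = dg k x i"
              "b' + vl r k e y = b + vl r k e x"
            have "y \<in> LL r k h" using b'(2,3) b(2) by (simp add: LL_def)
            then have "(b', y) \<in> Rep" using b' b unfolding Rep_def by auto
            then show "\<not> key b' y < key b x" using minK by (simp add: not_less)
          qed
          then have "(b, x) \<in> R" using RG b by auto
          then show "s \<in> (\<lambda>(b, x). b + vl r k e x) ` R" using b(3) by force
        qed
      qed
    qed
    then have "card (multi_sumset B A h r) = card R" by (simp add: bij_betw_same_card)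
    also have "\<dots> = (\<Sum>b\<in>B. card (LL r k h - U b))"
      unfolding R_def using assms(3) finite_LL by (simp add: card_SigmaI)
    finally show ?thesis .
  qed
  have "EP r (\<lambda>h. \<Sum>b\<in>B. real (card (LL r k h - U b)))"
    by (rule EP_sum[OF assms(3)]) (use EPb in blast)
  then have "EP r (\<lambda>h. real (card (multi_sumset B A h r)))"
    by (simp add: card_eq)
  then show ?thesis by (rule EP_is_poly)
qed

end
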